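(* Let $\lambda=(\lambda_1,\lambda_2)\in\mathbb{C}^2$ with $\sigma:=\lambda_1-\lambda_2\notin\mathbb{N}$, and let $\mu\in\mathbb{C}$. Let $M_\lambda$ be the Verma $gl(2)$-module with highest weight vector $v_\lambda$, and let $\widetilde M$ be the $gl(2)$-module of formal series described in the context. Put $$u_\lambda=\sum_{i=0}^{\infty}\frac{(-1)^i\langle\mu\rangle_i}{i!\,\langle\sigma\rangle_i}\,E_{2,1}^i v_\lambda\; x_1^{i+\mu}x_2^{-i+\mu}\in\widetilde M .$$ Then $u_\lambda$ is annihilated by $E_{1,2}$ and has weight $\lambda$, so there is a unique $gl(2)$-module homomorphism $\Phi:M_\lambda\to\widetilde M$ with $\Phi(v_\lambda)=u_\lambda$, and its Etingof trace function is $$E(z_1,z_2)=\frac{z_1^{\lambda_1+1}z_2^{\lambda_2}}{z_1-z_2}\;{}_2F_1\!\left(\mu+1,-\mu;\lambda_2-\lambda_1;\frac{z_2}{z_2-z_1}\right),$$ where the right-hand side is expanded as $z_1^{\lambda_1}z_2^{\lambda_2}$ times a power series in $z_2/z_1$ (i.e. in the region $|z_2|<|z_1|$).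
   Context: $gl(2)$ has basis $E_{i,j}$ (matrix units), $i,j\in\{1,2\}$. For $c\in\mathbb{C}$, $i\in\mathbb{N}$: $(c)_i=c(c+1)\cdots(c+i-1)$ and $\langle c\rangle_i=c(c-1)\cdots(c-i+1)$, with $(c)_0=\langle c\rangle_0=1$. ${}_2F_1(a,b;c;z)=\sum_{m\ge0}\frac{(a)_m(b)_m}{m!(c)_m}z^m$ for $-c\notin\mathbb{N}$. The Verma module $M_\lambda$ has basis $E_{2,1}^iv_\lambda$ ($i\in\mathbb{N}$) with $E_{1,2}v_\lambda=0$, $E_{k,k}v_\lambda=\lambda_kv_\lambda$. $\widetilde M$ is the space of formal series $\sum_{i_1,i_2\in\mathbb{Z}}v_{i_1,i_2}x_1^{i_1+\mu}x_2^{i_2+\mu}$ with $v_{i_1,i_2}\in M_\lambda$ arbitrary, on which $E_{j_1,j_2}$ acts by $E_{j_1,j_2}(v\,x^{m})=E_{j_1,j_2}(v)\,x^m+v\,(x_{j_1}\partial_{x_{j_2}}-\mu\delta_{j_1,j_2})(x^m)$. Writing $\Phi(w)=(x_1x_2)^{\mu}\sum_{\vec k\in\mathbb{Z}^2}\Phi_{\vec k}(w)x_1^{k_1}x_2^{k_2}$ with $\Phi_{\vec k}\in\mathrm{End}(M_\lambda)$, the Etingof trace function is $E(z_1,z_2)=(x_1x_2)^{-\mu}\mathrm{tr}_{M_\lambda}\Phi z_1^{E_{1,1}}z_2^{E_{2,2}}:=\sum_{\nu}\mathrm{tr}(\Phi_{\vec 0}|_{M_\lambda[\nu]})\,z_1^{\nu_1}z_2^{\nu_2}$,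 the sum over weights $\nu$ of $M_\lambda$, where $M_\lambda[\nu]$ is the (finite-dimensional) weight space on which $E_{k,k}$ acts by $\nu_k$. *)

theory Defs
  imports "HOL-Computational_Algebra.Computational_Algebra"
begin

text \<open>Falling factorial  <c>_i = c(c-1)...(c-i+1).  The rising factorial (c)_i is the
library's pochhammer.\<close>
definition falling :: "complex \<Rightarrow> nat \<Rightarrow> complex" where
  "falling c i = (\<Prod>k<i. c - of_nat k)"

definition hyp2F1_fps :: "complex \<Rightarrow> complex \<Rightarrow> complex \<Rightarrow> complex fps" where
  "hyp2F1_fps a b c =
     Abs_fps (\<lambda>m. pochhammer a m * pochhammer b m / (fact m * pochhammer c m))"

text \<open>Model of the Verma module M_lambda: the element  sum_i c_i E21^i v_lambda  is
the polynomial  sum_i c_i X^i  (M_lambda = C[E21] v_lambda as a vector space).\<close>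
definition diag_op :: "(nat \<Rightarrow> complex) \<Rightarrow> complex poly \<Rightarrow> complex poly" where
  "diag_op g p = (\<Sum>i\<le>degree p. monom (g i * coeff p i) i)"

definition lower_op :: "(nat \<Rightarrow> complex) \<Rightarrow> complex poly \<Rightarrow> complex poly" where
  "lower_op g p = (\<Sum>i\<in>{1..degree p}. monom (g i * coeff p i) (i - 1))"

text \<open>Action of E_{j1,j2} (j1,j2 in {1,2}) on M_lambda, lambda = (l1,l2):
  E11 E21^i v = (l1 - i) E21^i v,  E22 E21^i v = (l2 + i) E21^i v,
  E21 E21^i v = E21^(i+1) v,       E12 E21^i v = i (l1 - l2 - i + 1) E21^(i-1) v.\<close>
definition verma_act :: "complex \<Rightarrow> complex \<Rightarrow> nat \<Rightarrow> nat \<Rightarrow> complex poly \<Rightarrow> complex poly" where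
  "verma_act l1 l2 j1 j2 p =
     (if j1 = 1 \<and> j2 = 1 then diag_op (\<lambda>i. l1 - of_nat i) p
      else if j1 = 2 \<and> j2 = 2 then diag_op (\<lambda>i. l2 + of_nat i) p
      else if j1 = 2 \<and> j2 = 1 then p * [:0, 1:]
      else if j1 = 1 \<and> j2 = 2 then lower_op (\<lambda>i. of_nat i * (l1 - l2 - of_nat i + 1)) p
      else 0)"

text \<open>The module M~ of formal series  sum_{(i1,i2)} F(i1,i2) x1^(i1+mu) x2^(i2+mu),
F(i1,i2) in M_lambda arbitrary, with
  E_{j1,j2}(v x^m) = E_{j1,j2}(v) x^m + v (x_{j1} d/dx_{j2} - mu delta_{j1 j2}) x^m,
written out coefficientwise.\<close>
definition Mt_act :: "complex \<Rightarrow> complex \<Rightarrow> complex \<Rightarrow> nat \<Rightarrow> nat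
      \<Rightarrow> (int \<times> int \<Rightarrow> complex poly) \<Rightarrow> (int \<times> int \<Rightarrow> complex poly)" where
  "Mt_act l1 l2 \<mu> j1 j2 F = (\<lambda>(i1, i2).
     verma_act l1 l2 j1 j2 (F (i1, i2)) +
     (if j1 = 1 \<and> j2 = 1 then smult (of_int i1) (F (i1, i2))
      else if j1 = 2 \<and> j2 = 2 then smult (of_int i2) (F (i1, i2))
      else if j1 = 1 \<and> j2 = 2 then smult (of_int i2 + 1 + \<mu>) (F (i1 - 1, i2 + 1))
      else if j1 = 2 \<and> j2 = 1 then smult (of_int i1 + 1 + \<mu>) (F (i1 + 1, i2 - 1))
      else 0))"

definition is_gl2_hom :: "complex \<Rightarrow> complex \<Rightarrow> complex
      \<Rightarrow> (complex poly \<Rightarrow> (int \<times> int \<Rightarrow> complex poly)) \<Rightarrow> bool" where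
  "is_gl2_hom l1 l2 \<mu> \<Phi> \<longleftrightarrow>
     (\<forall>p q. \<Phi> (p + q) = (\<lambda>k. \<Phi> p k + \<Phi> q k)) \<and>
     (\<forall>c p. \<Phi> (smult c p) = (\<lambda>k. smult c (\<Phi> p k))) \<and>
     (\<forall>j1\<in>{1,2}. \<forall>j2\<in>{1,2}. \<forall>p.
        \<Phi> (verma_act l1 l2 j1 j2 p) = Mt_act l1 l2 \<mu> j1 j2 (\<Phi> p))"

definition u_vec :: "complex \<Rightarrow> complex \<Rightarrow> complex \<Rightarrow> (int \<times> int \<Rightarrow> complex poly)" where
  "u_vec l1 l2 \<mu> = (\<lambda>(i1, i2).
     if i1 \<ge> 0 \<and> i2 = - i1 then
       monom ((-1) ^ nat i1 * falling \<mu> (nat i1) /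
              (fact (nat i1) * falling (l1 - l2) (nat i1))) (nat i1)
     else 0)"

text \<open>The weights of M_lambda are (l1 - n, l2 + n), n in N, with
one-dimensional weight spaces spanned by E21^n v_lambda, so tr(Phi_0 on M_lambda[nu]) is the
coefficient of E21^n v in Phi_(0,0)(E21^n v).  Since
E = sum_n tr_n z1^(l1-n) z2^(l2+n) = z1^l1 z2^l2 sum_n tr_n (z2/z1)^n, we record E by the
formal power series  sum_n tr_n q^n  in q = z2/z1.\<close>
definition etingof_trace_fps :: "(complex poly \<Rightarrow> (int \<times> int \<Rightarrow> complex poly)) \<Rightarrow> complex fps" where
  "etingof_trace_fps \<Phi> = Abs_fps (\<lambda>n. coeff (\<Phi> (monom 1 n) (0, 0)) n)"

end

theory Submission
  imports Defs
begin


declare One_nat_def [simp del]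

lemma coeff_diag_op: "coeff (diag_op g p) n = g n * coeff p n"
  by (auto simp: diag_op_def coeff_sum coeff_monom coeff_eq_0 not_le)

lemma coeff_lower_op: "coeff (lower_op g p) n = g (Suc n) * coeff p (Suc n)"
proof -
  have "coeff (lower_op g p) n = (\<Sum>i\<in>{1..degree p}. if i = Suc n then g i * coeff p i else 0)"
    unfolding lower_op_def coeff_sum coeff_monom
    by (intro sum.cong) auto
  also have "\<dots> = g (Suc n) * coeff p (Suc n)"
    by (auto simp: coeff_eq_0)
  finally show ?thesis .
qed

lemma mulX: "(p::complex poly) * [:0, 1:] = pCons 0 p"
  by (simp add: mult_pCons_right)
lemma coeff_mulX: "coeff ((p::complex poly) * [:0, 1:]) n = (case n of 0 \<Rightarrow> 0 | Suc m \<Rightarrow> coeff p m)"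
  by (simp add: mulX coeff_pCons split: nat.split)

lemma Mt11: "coeff (Mt_act l1 l2 \<mu> 1 1 F (a, b)) n = (l1 - of_nat n + of_int a) * coeff (F (a, b)) n"
  by (simp add: Mt_act_def verma_act_def coeff_diag_op algebra_simps)
lemma Mt22: "coeff (Mt_act l1 l2 \<mu> 2 2 F (a, b)) n = (l2 + of_nat n + of_int b) * coeff (F (a, b)) n"
  by (simp add: Mt_act_def verma_act_def coeff_diag_op algebra_simps)
lemma Mt21: "coeff (Mt_act l1 l2 \<mu> 2 1 F (a, b)) n = (case n of 0 \<Rightarrow> 0 | Suc m \<Rightarrow> coeff (F (a, b)) m)
    + (of_int a + 1 + \<mu>) * coeff (F (a + 1, b - 1)) n"
  by (simp add: Mt_act_def verma_act_def coeff_mulX del: mult_pCons_right)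
lemma Mt12: "coeff (Mt_act l1 l2 \<mu> 1 2 F (a, b)) n = of_nat (Suc n) * (l1 - l2 - of_nat n) * coeff (F (a, b)) (Suc n)
    + (of_int b + 1 + \<mu>) * coeff (F (a - 1, b + 1)) n"
  by (simp add: Mt_act_def verma_act_def coeff_lower_op algebra_simps)

lemma verma_add: "verma_act l1 l2 j1 j2 (p + q) = verma_act l1 l2 j1 j2 p + verma_act l1 l2 j1 j2 q"
  by (auto simp: verma_act_def poly_eq_iff coeff_diag_op coeff_lower_op coeff_pCons algebra_simps split: nat.split)
lemma verma_smult: "verma_act l1 l2 j1 j2 (smult c p) = smult c (verma_act l1 l2 j1 j2 p)"
  by (auto simp: verma_act_def poly_eq_iff coeff_diag_op coeff_lower_op coeff_pCons algebra_simps split: nat.split)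

lemma Mt_add: "Mt_act l1 l2 \<mu> j1 j2 (\<lambda>k. F k + G k) = (\<lambda>k. Mt_act l1 l2 \<mu> j1 j2 F k + Mt_act l1 l2 \<mu> j1 j2 G k)"
  by (auto simp: Mt_act_def verma_add smult_add_right fun_eq_iff algebra_simps)
lemma Mt_smult: "Mt_act l1 l2 \<mu> j1 j2 (\<lambda>k. smult c (F k)) = (\<lambda>k. smult c (Mt_act l1 l2 \<mu> j1 j2 F k))"
  by (auto simp: Mt_act_def verma_smult fun_eq_iff poly_eq_iff algebra_simps)
lemma Mt_zero: "Mt_act l1 l2 \<mu> j1 j2 (\<lambda>k. 0) = (\<lambda>k. 0)"
  using Mt_smult[of l1 l2 \<mu> j1 j2 0 "\<lambda>k. 0"] by simp

lemma Mt_sum: "Mt_act l1 l2 \<mu> j1 j2 (\<lambda>k. \<Sum>i\<le>(N::nat). smult (c i) (G i k))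
   = (\<lambda>k. \<Sum>i\<le>N. smult (c i) (Mt_act l1 l2 \<mu> j1 j2 (G i) k))"
proof (induction N)
  case 0 then show ?case using Mt_smult by simp
next
  case (Suc N)
  show ?case using Mt_add[of l1 l2 \<mu> j1 j2 "\<lambda>k. \<Sum>i\<le>N. smult (c i) (G i k)" "\<lambda>k. smult (c (Suc N)) (G (Suc N) k)"]
    Suc Mt_smult[of l1 l2 \<mu> j1 j2 "c (Suc N)" "G (Suc N)"] by simp
qed

lemma comm11: "Mt_act l1 l2 \<mu> 1 1 (Mt_act l1 l2 \<mu> 2 1 F) = (\<lambda>k. Mt_act l1 l2 \<mu> 2 1 (Mt_act l1 l2 \<mu> 1 1 F) k - Mt_act l1 l2 \<mu> 2 1 F k)"
proof (rule ext, clarify, rule poly_eqI)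
  fix a b n show "coeff (Mt_act l1 l2 \<mu> 1 1 (Mt_act l1 l2 \<mu> 2 1 F) (a, b)) n =
         coeff (Mt_act l1 l2 \<mu> 2 1 (Mt_act l1 l2 \<mu> 1 1 F) (a, b) - Mt_act l1 l2 \<mu> 2 1 F (a, b)) n"
    by (cases n) (simp only: Mt11 Mt21 coeff_diff coeff_add nat.case; simp add: algebra_simps)+
qed

lemma comm22: "Mt_act l1 l2 \<mu> 2 2 (Mt_act l1 l2 \<mu> 2 1 F) = (\<lambda>k. Mt_act l1 l2 \<mu> 2 1 (Mt_act l1 l2 \<mu> 2 2 F) k + Mt_act l1 l2 \<mu> 2 1 F k)"
proof (rule ext, clarify, rule poly_eqI)
  fix a b n show "coeff (Mt_act l1 l2 \<mu> 2 2 (Mt_act l1 l2 \<mu> 2 1 F) (a, b)) n =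
         coeff (Mt_act l1 l2 \<mu> 2 1 (Mt_act l1 l2 \<mu> 2 2 F) (a, b) + Mt_act l1 l2 \<mu> 2 1 F (a, b)) n"
    by (cases n) (simp only: Mt22 Mt21 coeff_diff coeff_add nat.case; simp add: algebra_simps)+
qed

lemma comm12: "Mt_act l1 l2 \<mu> 1 2 (Mt_act l1 l2 \<mu> 2 1 F) = (\<lambda>k. Mt_act l1 l2 \<mu> 2 1 (Mt_act l1 l2 \<mu> 1 2 F) k
    + Mt_act l1 l2 \<mu> 1 1 F k - Mt_act l1 l2 \<mu> 2 2 F k)"
proof (rule ext, clarify, rule poly_eqI)
  fix a b n show "coeff (Mt_act l1 l2 \<mu> 1 2 (Mt_act l1 l2 \<mu> 2 1 F) (a, b)) n =
         coeff (Mt_act l1 l2 \<mu> 2 1 (Mt_act l1 l2 \<mu> 1 2 F) (a, b) + Mt_act l1 l2 \<mu> 1 1 F (a, b) - Mt_act l1 l2 \<mu> 2 2 F (a, b)) n"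
    by (cases n) (simp only: Mt11 Mt22 Mt21 Mt12 coeff_diff coeff_add nat.case; simp add: algebra_simps)+
qed


definition cc :: "complex \<Rightarrow> complex \<Rightarrow> nat \<Rightarrow> complex" where
  "cc \<mu> s i = (-1) ^ i * falling \<mu> i / (fact i * falling s i)"

lemma coeff_u: "coeff (u_vec l1 l2 \<mu> (a, b)) n = (if b = - a \<and> a = int n then cc \<mu> (l1 - l2) n else 0)"
proof (cases "b = - a \<and> a = int n")
  case True
  then show ?thesis by (simp add: u_vec_def cc_def coeff_monom)
next
  case False
  then have "\<not> (0 \<le> a \<and> b = - a) \<or> nat a \<noteq> n" by auto
  then show ?thesis using False unfolding u_vec_def by (auto simp: coeff_monom)
qed

lemma falling_Suc: "falling c (Suc n) = falling c n * (c - of_nat n)"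
  by (simp add: falling_def)

lemma notNat: fixes l1 l2 :: complex assumes "l1 - l2 \<notin> \<nat>" shows "l1 - l2 - of_nat n \<noteq> 0"
proof
  assume "l1 - l2 - of_nat n = 0"
  then have "l1 - l2 = of_nat n" by (simp only: right_minus_eq)
  then show False using assms of_nat_in_Nats by metis
qed

lemma falling_nz: assumes "l1 - l2 \<notin> \<nat>" shows "falling (l1 - l2) n \<noteq> 0"
proof (induction n)
  case 0 then show ?case by (simp add: falling_def)
next
  case (Suc n) then show ?case using notNat[OF assms, of n] by (simp add: falling_Suc)
qed

lemma cc_rec: assumes "l1 - l2 \<notin> \<nat>"
  shows "of_nat (Suc n) * (l1 - l2 - of_nat n) * cc \<mu> (l1 - l2) (Suc n) = (of_nat n - \<mu>) * cc \<mu> (l1 - l2) n"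
proof -
  have h1: "l1 - l2 - of_nat n \<noteq> 0" using notNat[OF assms, of n] .
  have h2: "falling (l1 - l2) n \<noteq> 0" using falling_nz[OF assms, of n] .
  have "cc \<mu> (l1 - l2) (Suc n) = - (\<mu> - of_nat n) / (of_nat (Suc n) * (l1 - l2 - of_nat n)) * cc \<mu> (l1 - l2) n"
    unfolding cc_def falling_Suc using h1 h2 by (simp add: field_simps)
  moreover have hD: "of_nat (Suc n) * (l1 - l2 - of_nat n) \<noteq> (0::complex)" by (metis h1 mult_eq_0_iff of_nat_neq_0)
  ultimately show ?thesis
    by (metis (no_types, lifting) hD minus_diff_eq nonzero_mult_div_cancel_left times_divide_eq_left times_divide_eq_right)
qed

lemma u12: assumes "l1 - l2 \<notin> \<nat>" shows "Mt_act l1 l2 \<mu> 1 2 (u_vec l1 l2 \<mu>) = (\<lambda>_. 0)"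
proof (rule ext, clarify, rule poly_eqI)
  fix a b n
  show "coeff (Mt_act l1 l2 \<mu> 1 2 (u_vec l1 l2 \<mu>) (a, b)) n = coeff 0 n"
  proof (cases "b = - a \<and> a = int n + 1")
    case True
    then have "coeff (Mt_act l1 l2 \<mu> 1 2 (u_vec l1 l2 \<mu>) (a, b)) n
      = of_nat (Suc n) * (l1 - l2 - of_nat n) * cc \<mu> (l1 - l2) (Suc n) + (of_int b + 1 + \<mu>) * cc \<mu> (l1 - l2) n"
      by (simp add: Mt12 coeff_u)
    also have "\<dots> = 0" using True cc_rec[OF assms, of n \<mu>] by (simp add: algebra_simps)
    finally show ?thesis by simp
  next
    case False
    then show ?thesis by (auto simp: Mt12 coeff_u)
  qed
qed

lemma u11: "Mt_act l1 l2 \<mu> 1 1 (u_vec l1 l2 \<mu>) = (\<lambda>k. smult l1 (u_vec l1 l2 \<mu> k))"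
  by (rule ext, clarify, rule poly_eqI) (auto simp: Mt11 coeff_u)

lemma u22: "Mt_act l1 l2 \<mu> 2 2 (u_vec l1 l2 \<mu>) = (\<lambda>k. smult l2 (u_vec l1 l2 \<mu> k))"
  by (rule ext, clarify, rule poly_eqI) (auto simp: Mt22 coeff_u)

definition Bv where "Bv l1 l2 \<mu> n = (Mt_act l1 l2 \<mu> 2 1 ^^ n) (u_vec l1 l2 \<mu>)"

lemma Bv_0: "Bv l1 l2 \<mu> 0 = u_vec l1 l2 \<mu>" by (simp add: Bv_def)
lemma Bv_Suc: "Bv l1 l2 \<mu> (Suc n) = Mt_act l1 l2 \<mu> 2 1 (Bv l1 l2 \<mu> n)" by (simp add: Bv_def)

lemma B11: "Mt_act l1 l2 \<mu> 1 1 (Bv l1 l2 \<mu> n) = (\<lambda>k. smult (l1 - of_nat n) (Bv l1 l2 \<mu> n k))"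
proof (induction n)
  case 0 then show ?case by (simp add: Bv_0 u11)
next
  case (Suc n)
  show ?case
    by (simp add: Bv_Suc comm11 Suc Mt_smult fun_eq_iff poly_eq_iff algebra_simps)
qed

lemma B22: "Mt_act l1 l2 \<mu> 2 2 (Bv l1 l2 \<mu> n) = (\<lambda>k. smult (l2 + of_nat n) (Bv l1 l2 \<mu> n k))"
proof (induction n)
  case 0 then show ?case by (simp add: Bv_0 u22)
next
  case (Suc n)
  show ?case
    by (simp add: Bv_Suc comm22 Suc Mt_smult fun_eq_iff poly_eq_iff algebra_simps)
qed

lemma B12: assumes "l1 - l2 \<notin> \<nat>"
  shows "Mt_act l1 l2 \<mu> 1 2 (Bv l1 l2 \<mu> n) = (\<lambda>k. smult (of_nat n * (l1 - l2 - of_nat n + 1)) (Bv l1 l2 \<mu> (n - 1) k))"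
proof (induction n)
  case 0 then show ?case by (simp add: Bv_0 u12[OF assms])
next
  case (Suc n)
  note IH = Suc.IH
  show ?case
  proof (cases n)
    case 0
    then show ?thesis
      by (simp add: Bv_Suc Bv_0 comm12 u12[OF assms] u11 u22 Mt_zero fun_eq_iff poly_eq_iff algebra_simps)
  next
    case (Suc m)
    have "Mt_act l1 l2 \<mu> 1 2 (Bv l1 l2 \<mu> (Suc n)) = (\<lambda>k. Mt_act l1 l2 \<mu> 2 1 (Mt_act l1 l2 \<mu> 1 2 (Bv l1 l2 \<mu> n)) k
       + Mt_act l1 l2 \<mu> 1 1 (Bv l1 l2 \<mu> n) k - Mt_act l1 l2 \<mu> 2 2 (Bv l1 l2 \<mu> n) k)"
      by (simp add: Bv_Suc comm12)
    also have "Mt_act l1 l2 \<mu> 2 1 (Mt_act l1 l2 \<mu> 1 2 (Bv l1 l2 \<mu> n)) =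
        (\<lambda>k. smult (of_nat n * (l1 - l2 - of_nat n + 1)) (Bv l1 l2 \<mu> n k))"
      unfolding IH Mt_smult using Suc by (simp add: Bv_Suc)
    finally show ?thesis
      by (simp add: B11 B22 fun_eq_iff poly_eq_iff algebra_simps)
  qed
qed


definition Phi where "Phi l1 l2 \<mu> p = (\<lambda>k. \<Sum>i\<le>degree p. smult (coeff p i) (Bv l1 l2 \<mu> i k))"

lemma Phi_eq: assumes "degree p \<le> N"
  shows "Phi l1 l2 \<mu> p = (\<lambda>k. \<Sum>i\<le>N. smult (coeff p i) (Bv l1 l2 \<mu> i k))"
  unfolding Phi_def
proof (rule ext, rule sum.mono_neutral_left)
  show "\<forall>i\<in>{..N} - {..degree p}. smult (coeff p i) (Bv l1 l2 \<mu> i k) = 0" for k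
    by (auto simp: coeff_eq_0)
qed (use assms in auto)

lemma smult_sum_right: "smult c (\<Sum>i\<in>A. f i) = (\<Sum>i\<in>A. smult c (f i))"
  by (induction A rule: infinite_finite_induct) (auto simp: smult_add_right)

lemma deg11: "degree (verma_act l1 l2 1 1 p) \<le> degree p"
  by (rule degree_le) (auto simp: verma_act_def coeff_diag_op coeff_eq_0)
lemma deg22: "degree (verma_act l1 l2 2 2 p) \<le> degree p"
  by (rule degree_le) (auto simp: verma_act_def coeff_diag_op coeff_eq_0)
lemma deg12: "degree (verma_act l1 l2 1 2 p) \<le> degree p"
  by (rule degree_le) (auto simp: verma_act_def coeff_lower_op coeff_eq_0)

lemma Phi_hom: assumes "l1 - l2 \<notin> \<nat>" shows "is_gl2_hom l1 l2 \<mu> (Phi l1 l2 \<mu>)"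
  unfolding is_gl2_hom_def
proof (intro conjI allI ballI)
  fix p q :: "complex poly"
  let ?N = "max (degree p) (degree q)"
  show "Phi l1 l2 \<mu> (p + q) = (\<lambda>k. Phi l1 l2 \<mu> p k + Phi l1 l2 \<mu> q k)"
    using Phi_eq[of "p + q" ?N l1 l2 \<mu>] Phi_eq[of p ?N l1 l2 \<mu>] Phi_eq[of q ?N l1 l2 \<mu>]
    by (simp add: degree_add_le smult_add_left sum.distrib)
next
  fix c and p :: "complex poly"
  show "Phi l1 l2 \<mu> (smult c p) = (\<lambda>k. smult c (Phi l1 l2 \<mu> p k))"
    using Phi_eq[of "smult c p" "degree p" l1 l2 \<mu>] Phi_eq[of p "degree p" l1 l2 \<mu>]
    by (simp add: degree_smult_le smult_sum_right)
next
  fix j1 j2 :: nat and p :: "complex poly"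
  assume j1: "j1 \<in> {1, 2}" and j2: "j2 \<in> {1, 2}"
  let ?N = "degree p"
  have MP: "Mt_act l1 l2 \<mu> j1 j2 (Phi l1 l2 \<mu> p) = (\<lambda>k. \<Sum>i\<le>Suc ?N. smult (coeff p i) (Mt_act l1 l2 \<mu> j1 j2 (Bv l1 l2 \<mu> i) k))"
    for j1 j2
    by (subst Phi_eq[of p "Suc ?N"]) (simp_all add: Mt_sum del: sum.atMost_Suc)
  consider "j1 = 1" "j2 = 1" | "j1 = 2" "j2 = 2" | "j1 = 2" "j2 = 1" | "j1 = 1" "j2 = 2"
    using j1 j2 by auto
  then show "Phi l1 l2 \<mu> (verma_act l1 l2 j1 j2 p) = Mt_act l1 l2 \<mu> j1 j2 (Phi l1 l2 \<mu> p)"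
  proof cases
    case 1
    have "Phi l1 l2 \<mu> (verma_act l1 l2 1 1 p) = (\<lambda>k. \<Sum>i\<le>Suc ?N. smult (coeff (verma_act l1 l2 1 1 p) i) (Bv l1 l2 \<mu> i k))"
      by (rule Phi_eq) (use deg11[of l1 l2 p] in simp)
    then show ?thesis using 1 unfolding MP
      by (simp add: B11 verma_act_def coeff_diag_op mult.commute)
  next
    case 2
    have "Phi l1 l2 \<mu> (verma_act l1 l2 2 2 p) = (\<lambda>k. \<Sum>i\<le>Suc ?N. smult (coeff (verma_act l1 l2 2 2 p) i) (Bv l1 l2 \<mu> i k))"
      by (rule Phi_eq) (use deg22[of l1 l2 p] in simp)
    then show ?thesis using 2 unfolding MP
      by (simp add: B22 verma_act_def coeff_diag_op mult.commute)
  next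
    case 3
    have "Phi l1 l2 \<mu> (verma_act l1 l2 2 1 p) = (\<lambda>k. \<Sum>i\<le>Suc ?N. smult (coeff (verma_act l1 l2 2 1 p) i) (Bv l1 l2 \<mu> i k))"
      by (rule Phi_eq) (simp add: verma_act_def mulX degree_pCons_le)
    also have "\<dots> = (\<lambda>k. \<Sum>i\<le>?N. smult (coeff p i) (Bv l1 l2 \<mu> (Suc i) k))"
      by (simp add: verma_act_def mulX sum.atMost_Suc_shift del: sum.atMost_Suc)
    also have "\<dots> = (\<lambda>k. \<Sum>i\<le>Suc ?N. smult (coeff p i) (Bv l1 l2 \<mu> (Suc i) k))"
      by (simp add: coeff_eq_0)
    finally show ?thesis using 3 unfolding MP by (simp add: Bv_Suc)
  next
    case 4
    have "Phi l1 l2 \<mu> (verma_act l1 l2 1 2 p) = (\<lambda>k. \<Sum>i\<le>?N. smult (coeff (verma_act l1 l2 1 2 p) i) (Bv l1 l2 \<mu> i k))"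
      by (rule Phi_eq) (use deg12[of l1 l2 p] in simp)
    also have "\<dots> = (\<lambda>k. \<Sum>i\<le>Suc ?N. smult (coeff p i) (smult (of_nat i * (l1 - l2 - of_nat i + 1)) (Bv l1 l2 \<mu> (i - 1) k)))"
      by (simp add: verma_act_def coeff_lower_op sum.atMost_Suc_shift algebra_simps del: sum.atMost_Suc)
    finally show ?thesis using 4 unfolding MP by (simp add: B12[OF assms])
  qed
qed


lemma hom_zero: assumes "is_gl2_hom l1 l2 \<mu> \<Phi>" shows "\<Phi> 0 = (\<lambda>k. 0)"
proof -
  have "\<Phi> (smult 0 0) = (\<lambda>k. smult 0 (\<Phi> 0 k))" using assms unfolding is_gl2_hom_def by blast
  then show ?thesis by simp
qed

lemma hom_sum: assumes "is_gl2_hom l1 l2 \<mu> \<Phi>"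
  shows "\<Phi> (\<Sum>i\<le>(N::nat). smult (c i) (f i)) = (\<lambda>k. \<Sum>i\<le>N. smult (c i) (\<Phi> (f i) k))"
proof (induction N)
  case 0 then show ?case using assms unfolding is_gl2_hom_def by simp
next
  case (Suc N)
  have "\<Phi> (\<Sum>i\<le>Suc N. smult (c i) (f i)) = \<Phi> ((\<Sum>i\<le>N. smult (c i) (f i)) + smult (c (Suc N)) (f (Suc N)))"
    by simp
  also have "\<dots> = (\<lambda>k. \<Phi> (\<Sum>i\<le>N. smult (c i) (f i)) k + \<Phi> (smult (c (Suc N)) (f (Suc N))) k)"
    using assms unfolding is_gl2_hom_def by blast
  finally show ?case using Suc assms unfolding is_gl2_hom_def by simp
qed

lemma hom_monom: assumes "is_gl2_hom l1 l2 \<mu> \<Phi>" "\<Phi> 1 = u_vec l1 l2 \<mu>"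
  shows "\<Phi> (monom 1 n) = Bv l1 l2 \<mu> n"
proof (induction n)
  case 0 then show ?case using assms by (simp add: Bv_0)
next
  case (Suc n)
  have "monom 1 (Suc n) = verma_act l1 l2 2 1 (monom (1::complex) n)"
    by (simp add: verma_act_def mulX monom_Suc)
  then show ?case using Suc assms(1) unfolding is_gl2_hom_def by (simp add: Bv_Suc)
qed

lemma hom_unique: assumes "is_gl2_hom l1 l2 \<mu> \<Phi>" "\<Phi> 1 = u_vec l1 l2 \<mu>"
  shows "\<Phi> = Phi l1 l2 \<mu>"
proof (rule ext)
  fix p :: "complex poly"
  have "p = (\<Sum>i\<le>degree p. smult (coeff p i) (monom 1 i))"
    by (simp add: smult_monom poly_as_sum_of_monoms)
  then have "\<Phi> p = \<Phi> (\<Sum>i\<le>degree p. smult (coeff p i) (monom 1 i))" by simp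
  also have "\<dots> = Phi l1 l2 \<mu> p"
    unfolding hom_sum[OF assms(1)] hom_monom[OF assms] Phi_def ..
  finally show "\<Phi> p = Phi l1 l2 \<mu> p" .
qed

definition ccz where "ccz \<mu> s (k::int) = (if k \<ge> 0 then cc \<mu> s (nat k) else 0)"

definition bet where "bet \<mu> s n (a::int) =
  (\<Sum>m\<le>n. of_nat (n choose m) * pochhammer (of_int a + 1 + \<mu>) m * ccz \<mu> s (a + int m))"

lemma bet_neg: assumes "int n + a < 0" shows "bet \<mu> s n a = 0"
  unfolding bet_def by (rule sum.neutral) (use assms in \<open>auto simp: ccz_def\<close>)

lemma bet_Suc: "bet \<mu> s (Suc n) a = bet \<mu> s n a + (of_int a + 1 + \<mu>) * bet \<mu> s n (a + 1)"
proof -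
  define x where "x = (of_int a + 1 + \<mu>)"
  have x1: "of_int (a + 1) + 1 + \<mu> = x + 1" by (simp add: x_def)
  have "bet \<mu> s (Suc n) a = ccz \<mu> s a + (\<Sum>m\<le>n. of_nat (Suc n choose Suc m) * pochhammer x (Suc m) * ccz \<mu> s (a + int (Suc m)))"
    unfolding bet_def x_def by (simp add: sum.atMost_Suc_shift del: sum.atMost_Suc)
  also have "\<dots> = (ccz \<mu> s a + (\<Sum>m\<le>n. of_nat (n choose Suc m) * pochhammer x (Suc m) * ccz \<mu> s (a + int (Suc m))))
      + (\<Sum>m\<le>n. of_nat (n choose m) * pochhammer x (Suc m) * ccz \<mu> s (a + int (Suc m)))"
    by (simp add: sum.distrib algebra_simps)
  also have "ccz \<mu> s a + (\<Sum>m\<le>n. of_nat (n choose Suc m) * pochhammer x (Suc m) * ccz \<mu> s (a + int (Suc m)))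
      = (\<Sum>m\<le>Suc n. of_nat (n choose m) * pochhammer x m * ccz \<mu> s (a + int m))"
    by (simp add: sum.atMost_Suc_shift del: sum.atMost_Suc)
  also have "\<dots> = bet \<mu> s n a"
    unfolding bet_def x_def by simp
  also have "(\<Sum>m\<le>n. of_nat (n choose m) * pochhammer x (Suc m) * ccz \<mu> s (a + int (Suc m)))
      = x * bet \<mu> s n (a + 1)"
    unfolding bet_def x1 by (simp add: pochhammer_rec sum_distrib_left algebra_simps)
  finally show ?thesis by (simp add: x_def)
qed

lemma coeff_Bv: "coeff (Bv l1 l2 \<mu> n (a, b)) j = (if b = - a \<and> int j = int n + a then bet \<mu> (l1 - l2) n a else 0)"
proof (induction n arbitrary: a b j)
  case 0
  then show ?case by (auto simp: Bv_0 coeff_u bet_def ccz_def)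
next
  case (Suc n)
  have "coeff (Bv l1 l2 \<mu> (Suc n) (a, b)) j = (case j of 0 \<Rightarrow> 0 | Suc m \<Rightarrow> coeff (Bv l1 l2 \<mu> n (a, b)) m)
    + (of_int a + 1 + \<mu>) * coeff (Bv l1 l2 \<mu> n (a + 1, b - 1)) j"
    by (simp add: Bv_Suc Mt21)
  also have "\<dots> = (if b = - a \<and> int j = int (Suc n) + a then bet \<mu> (l1 - l2) (Suc n) a else 0)"
  proof (cases j)
    case 0
    then show ?thesis using bet_neg[of n a \<mu> "l1 - l2"] by (auto simp: Suc.IH bet_Suc)
  next
    case (Suc m)
    then show ?thesis by (auto simp: Suc.IH bet_Suc)
  qed
  finally show ?case .
qed


lemma choose_sym': "(i + j) choose j = (i + j) choose (i::nat)"
  using binomial_symmetric[of j "i + j"] by simp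

lemma inv_pow: "(inverse (1 - fps_X :: complex fps) ^ Suc i) $ k = of_nat ((k + i) choose i)"
proof (induction i arbitrary: k)
  case 0
  then show ?case by (simp add: fps_inverse_one_minus_fps_X)
next
  case (Suc i)
  have "(inverse (1 - fps_X :: complex fps) ^ Suc (Suc i)) $ k
      = ((inverse (1 - fps_X :: complex fps) ^ Suc i) * inverse (1 - fps_X)) $ k"
    by (simp only: power_Suc2)
  also have "\<dots> = (\<Sum>j=0..k. of_nat ((j + i) choose i))"
    by (simp only: fps_mult_nth Suc.IH) (simp add: fps_inverse_one_minus_fps_X)
  also have "\<dots> = of_nat (\<Sum>j\<le>k. (i + j) choose j)"
    by (simp add: atLeast0AtMost choose_sym' add.commute)
  also have "(\<Sum>j\<le>k. (i + j) choose j) = Suc (i + k) choose k"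
    by (rule sum_choose_lower)
  also have "\<dots> = (k + Suc i) choose Suc i"
    using choose_sym'[of "Suc i" k] by (simp add: add.commute[of k i])
  finally show ?case .
qed

lemma compose_mult_nth: fixes A F g :: "complex fps" assumes "g $ 0 = 0"
  shows "(A * (F oo g)) $ n = (\<Sum>i\<le>n. F $ i * (A * g ^ i) $ n)"
proof -
  have "(A * (F oo g)) $ n = (\<Sum>k=0..n. A $ k * (\<Sum>i\<le>n. F $ i * (g ^ i) $ (n - k)))"
    unfolding fps_mult_nth
  proof (rule sum.cong[OF refl])
    fix k assume "k \<in> {0..n}"
    have "(F oo g) $ (n - k) = (\<Sum>i\<le>n. F $ i * (g ^ i) $ (n - k))"
      unfolding fps_compose_nth atLeast0AtMost
      by (rule sum.mono_neutral_left) (auto simp: startsby_zero_power_prefix[OF assms])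
    then show "A $ k * (F oo g) $ (n - k) = A $ k * (\<Sum>i\<le>n. F $ i * (g ^ i) $ (n - k))" by simp
  qed
  also have "\<dots> = (\<Sum>k=0..n. \<Sum>i\<le>n. F $ i * (A $ k * (g ^ i) $ (n - k)))"
    by (simp add: sum_distrib_left ac_simps)
  also have "\<dots> = (\<Sum>i\<le>n. \<Sum>k=0..n. F $ i * (A $ k * (g ^ i) $ (n - k)))"
    by (rule sum.swap)
  also have "\<dots> = (\<Sum>i\<le>n. F $ i * (A * g ^ i) $ n)"
    by (simp only: fps_mult_nth sum_distrib_left)
  finally show ?thesis .
qed


lemma neg1_pow: "(-1 :: complex fps) ^ i = fps_const ((-1) ^ i)"
proof -
  have "(-1::complex fps) = fps_const (-1)" by simp
  then show ?thesis by (simp only: fps_const_power)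
qed
lemma g_pow_nth: "(inverse (1 - fps_X :: complex fps) * (- (fps_X * inverse (1 - fps_X))) ^ i) $ n
   = (-1) ^ i * of_nat (n choose i)"
proof -
  define I where "I = inverse (1 - fps_X :: complex fps)"
  have "I * (- (fps_X * I)) ^ i = I * ((-1) ^ i * (fps_X ^ i * I ^ i))"
    by (subst power_minus) (simp only: power_mult_distrib)
  also have "\<dots> = (-1) ^ i * (fps_X ^ i * I ^ Suc i)"
    by (simp only: power_Suc mult.assoc mult.left_commute)
  finally have e: "I * (- (fps_X * I)) ^ i = fps_const ((-1) ^ i) * (fps_X ^ i * I ^ Suc i)"
    by (simp only: neg1_pow)
  have "(fps_X ^ i * I ^ Suc i) $ n = of_nat (n choose i)"
    unfolding fps_X_power_mult_nth I_def inv_pow by (auto simp: binomial_eq_0)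
  then show ?thesis
    unfolding I_def[symmetric] e fps_mult_left_const_nth by simp
qed


lemma poch_neg: "pochhammer (- x) i = (-1) ^ i * falling x i"
proof (induction i)
  case 0 then show ?case by (simp add: falling_def)
next
  case (Suc i)
  show ?case by (simp only: pochhammer_rec' falling_Suc Suc.IH power_Suc) (simp add: algebra_simps)
qed

lemma term_eq: assumes "l1 - l2 \<notin> \<nat>"
  shows "hyp2F1_fps (\<mu> + 1) (- \<mu>) (l2 - l1) $ m * ((-1) ^ m * of_nat (n choose m))
    = of_nat (n choose m) * pochhammer (of_int 0 + 1 + \<mu>) m * ccz \<mu> (l1 - l2) (0 + int m)"
proof -
  have f: "falling (l1 - l2) m \<noteq> 0" by (rule falling_nz[OF assms])
  have p: "pochhammer (l2 - l1) m = (-1) ^ m * falling (l1 - l2) m"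
    using poch_neg[of "l1 - l2" m] by simp
  have s: "((-1::complex) ^ m) * (-1) ^ m = 1"
    by (simp flip: power_mult_distrib)
  show ?thesis
    unfolding hyp2F1_fps_def fps_nth_Abs_fps ccz_def cc_def p poch_neg
    using f s by (simp add: field_simps)
qed



theorem theorem2p1:
  fixes l1 l2 \<mu> :: complex
  assumes "l1 - l2 \<notin> \<nat>"
  shows "Mt_act l1 l2 \<mu> 1 2 (u_vec l1 l2 \<mu>) = (\<lambda>_. 0)
       \<and> Mt_act l1 l2 \<mu> 1 1 (u_vec l1 l2 \<mu>) = (\<lambda>k. smult l1 (u_vec l1 l2 \<mu> k))
       \<and> Mt_act l1 l2 \<mu> 2 2 (u_vec l1 l2 \<mu>) = (\<lambda>k. smult l2 (u_vec l1 l2 \<mu> k))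
       \<and> (\<exists>!\<Phi>. is_gl2_hom l1 l2 \<mu> \<Phi> \<and> \<Phi> 1 = u_vec l1 l2 \<mu>)
       \<and> (\<forall>\<Phi>. is_gl2_hom l1 l2 \<mu> \<Phi> \<and> \<Phi> 1 = u_vec l1 l2 \<mu> \<longrightarrow>
            etingof_trace_fps \<Phi> =
              inverse (1 - fps_X) *
              fps_compose (hyp2F1_fps (\<mu> + 1) (- \<mu>) (l2 - l1))
                          (- (fps_X * inverse (1 - fps_X))))"
proof (intro conjI)
  show "Mt_act l1 l2 \<mu> 1 2 (u_vec l1 l2 \<mu>) = (\<lambda>_. 0)" by (rule u12[OF assms])
  show "Mt_act l1 l2 \<mu> 1 1 (u_vec l1 l2 \<mu>) = (\<lambda>k. smult l1 (u_vec l1 l2 \<mu> k))" by (rule u11)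
  show "Mt_act l1 l2 \<mu> 2 2 (u_vec l1 l2 \<mu>) = (\<lambda>k. smult l2 (u_vec l1 l2 \<mu> k))" by (rule u22)
  have P1: "Phi l1 l2 \<mu> 1 = u_vec l1 l2 \<mu>" by (simp add: Phi_def Bv_0)
  show "\<exists>!\<Phi>. is_gl2_hom l1 l2 \<mu> \<Phi> \<and> \<Phi> 1 = u_vec l1 l2 \<mu>"
    using Phi_hom[OF assms] P1 hom_unique by blast
  show "\<forall>\<Phi>. is_gl2_hom l1 l2 \<mu> \<Phi> \<and> \<Phi> 1 = u_vec l1 l2 \<mu> \<longrightarrow>
            etingof_trace_fps \<Phi> =
              inverse (1 - fps_X) *
              fps_compose (hyp2F1_fps (\<mu> + 1) (- \<mu>) (l2 - l1))
                          (- (fps_X * inverse (1 - fps_X)))"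
  proof (intro allI impI)
    fix \<Phi> assume h: "is_gl2_hom l1 l2 \<mu> \<Phi> \<and> \<Phi> 1 = u_vec l1 l2 \<mu>"
    show "etingof_trace_fps \<Phi> = inverse (1 - fps_X) *
              fps_compose (hyp2F1_fps (\<mu> + 1) (- \<mu>) (l2 - l1))
                          (- (fps_X * inverse (1 - fps_X)))"
    proof (rule fps_ext)
      fix n
      have "etingof_trace_fps \<Phi> $ n = bet \<mu> (l1 - l2) n 0"
        unfolding etingof_trace_fps_def using hom_monom[of l1 l2 \<mu> \<Phi> n] h by (simp add: coeff_Bv)
      also have "\<dots> = (\<Sum>i\<le>n. hyp2F1_fps (\<mu> + 1) (- \<mu>) (l2 - l1) $ i * ((-1) ^ i * of_nat (n choose i)))"
        unfolding bet_def by (rule sum.cong[OF refl], subst term_eq[OF assms], rule refl)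
      also have "\<dots> = (inverse (1 - fps_X) *
              fps_compose (hyp2F1_fps (\<mu> + 1) (- \<mu>) (l2 - l1))
                          (- (fps_X * inverse (1 - fps_X)))) $ n"
        by (subst compose_mult_nth) (simp_all add: g_pow_nth)
      finally show "etingof_trace_fps \<Phi> $ n = (inverse (1 - fps_X) *
              fps_compose (hyp2F1_fps (\<mu> + 1) (- \<mu>) (l2 - l1))
                          (- (fps_X * inverse (1 - fps_X)))) $ n" .
    qed
  qed
qed

end
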